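(* Let $N\ge 1$, let $\Omega\subset\mathbb{R}^{3N}$ be open and bounded, let $\beta>0$, and let $U:\Omega\to\mathbb{R}\cup\{+\infty\}$ be a molecular potential of the form described in the context (so that in particular (P1)–(P3) hold), with $Z=\int_\Omega e^{-\beta U}dx\in(0,\infty)$. (a) There exists a family $\{U_\varepsilon\}_{\varepsilon>0}$ of functions $U_\varepsilon:\Omega\to\mathbb{R}$ such that: (i) each $U_\varepsilon$ is $C^1$ and Lipschitz; (ii) there is $M>0$ with $U_\varepsilon(x)\ge -M$ for all $x\in\Omega$ and all $\varepsilon>0$; (iii) $\lim_{\varepsilon\to0}U_\varepsilon(x)=U(x)$ for every $x\in\Omega$; (iv) $U_\varepsilon(x)=U(x)$ for every $x$ with $U(x)\le 1/\varepsilon$. (b) Set $F_\varepsilon=e^{-\beta U_\varepsilon}$, $F=e^{-\beta U}$, $Z_\varepsilon=\int_\Omega F_\varepsilon\,dx$, $Z=\int_\Omega F\,dx$, $\rho_\varepsilon=F_\varepsilon/Z_\varepsilon$, $\rho=F/Z$. Then each $\rho_\varepsilon$ is $C^1$ and Lipschitz, and $\lim_{\varepsilon\to0}\|\rho_\varepsilon-\rho\|_{L^1(\Omega)}=0$.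
   Context: Points of $\mathbb{R}^{3N}$ are written $x=(x_1,\dots,x_N)$, $x_i\in\mathbb{R}^3$. A molecular potential is $U(x)=\sum_{\text{bonds }(i,j)} b_{ij}(\ell_{ij}-\overline{\ell_{ij}})^2+\sum_{\text{bond angles }(i,j,k)} a_{ijk}(\alpha_{ijk}-\overline{\alpha_{ijk}})^2+\sum_{\text{torsions }(i,j,k,l)}\sum_{n=1}^{n_{\max}}\kappa_{ijkl,n}\big[1+\cos(n\phi_{ijkl}-\overline{\phi_{ijkl,n}})\big]+\sum_{i\neq j}\frac{q_iq_j}{|x_i-x_j|}+\sum_{i\neq j}\Big(\frac{A_{ij}}{|x_i-x_j|^{12}}-\frac{B_{ij}}{|x_i-x_j|^6}\Big)$, where the first three sums run over bond lengths $\ell_{ij}=|x_i-x_j|$, bond angles $\alpha_{ijk}$ and torsion (dihedral) angles $\phi_{ijkl}$ of a fixed bond graph, the last two over pairs of atoms; $b_{ij},a_{ijk}>0$, $\kappa_{ijkl,n},A_{ij},B_{ij}\ge0$, with $A_{ij}>0$ whenever $q_iq_j<0$ or $B_{ij}>0$; $\overline{\ell_{ij}},\overline{\alpha_{ijk}},\overline{\phi_{ijkl,n}},q_i$ are real constants. Such a potential is assumed to satisfy: (P1) $U$ is $C^1$ on $\{x: x_i\neq x_j\ \forall i\neq j\}$; (P2) $U\ge U_0$ for some constant $U_0$; (P3) $U(x)\to+\infty$ as $\min_{i\neq j}|x_i-x_j|\to0$. *)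

theory Defs
  imports "HOL-Analysis.Analysis" "HOL-Analysis.Cross3"
begin

text \<open>Configurations of N atoms: points of R^{3N} are x :: real^3^'n, with atoms
  indexed by the finite type 'n (N = CARD('n)); atom i sits at x $ i.\<close>

definition collision_free :: "(real^3^'n) set" where
  "collision_free = {x. \<forall>i j. i \<noteq> j \<longrightarrow> x $ i \<noteq> x $ j}"

definition bond_angle :: "real^3 \<Rightarrow> real^3 \<Rightarrow> real^3 \<Rightarrow> real" where
  "bond_angle x y z =
     arccos (((x - y) \<bullet> (z - y)) / (norm (x - y) * norm (z - y)))"

text \<open>Signed torsion (dihedral) angle of the chain w-x-y-z (IUPAC convention),
  values in (-pi, pi].\<close>
definition torsion_angle :: "real^3 \<Rightarrow> real^3 \<Rightarrow> real^3 \<Rightarrow> real^3 \<Rightarrow> real" where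
  "torsion_angle w x y z =
     (let b1 = x - w; b2 = y - x; b3 = z - y;
          n1 = cross3 b1 b2; n2 = cross3 b2 b3
      in Arg (Complex (n1 \<bullet> n2) (norm b2 * (b1 \<bullet> n2))))"

record 'n mol_params =
  bonds :: "('n \<times> 'n) set"
  angles :: "('n \<times> 'n \<times> 'n) set"
  torsions :: "('n \<times> 'n \<times> 'n \<times> 'n) set"
  nmax :: nat
  bcoef :: "'n \<Rightarrow> 'n \<Rightarrow> real"
  lbar :: "'n \<Rightarrow> 'n \<Rightarrow> real"
  acoef :: "'n \<Rightarrow> 'n \<Rightarrow> 'n \<Rightarrow> real"
  abar :: "'n \<Rightarrow> 'n \<Rightarrow> 'n \<Rightarrow> real"
  kappa :: "'n \<Rightarrow> 'n \<Rightarrow> 'n \<Rightarrow> 'n \<Rightarrow> nat \<Rightarrow> real"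
  phibar :: "'n \<Rightarrow> 'n \<Rightarrow> 'n \<Rightarrow> 'n \<Rightarrow> nat \<Rightarrow> real"
  charge :: "'n \<Rightarrow> real"
  LJA :: "'n \<Rightarrow> 'n \<Rightarrow> real"
  LJB :: "'n \<Rightarrow> 'n \<Rightarrow> real"

definition bonded :: "'n mol_params \<Rightarrow> 'n \<Rightarrow> 'n \<Rightarrow> bool" where
  "bonded P i j \<longleftrightarrow> (i, j) \<in> bonds P \<or> (j, i) \<in> bonds P"

definition mol_admissible :: "'n mol_params \<Rightarrow> bool" where
  "mol_admissible P \<longleftrightarrow>
     (\<forall>i j. (i, j) \<in> bonds P \<longrightarrow> i \<noteq> j) \<and>
     angles P \<subseteq> {(i, j, k). bonded P i j \<and> bonded P j k \<and> i \<noteq> k} \<and>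
     torsions P \<subseteq> {(i, j, k, l). bonded P i j \<and> bonded P j k \<and>
                                 bonded P k l \<and> distinct [i, j, k, l]} \<and>
     (\<forall>(i, j) \<in> bonds P. bcoef P i j > 0) \<and>
     (\<forall>(i, j, k) \<in> angles P. acoef P i j k > 0) \<and>
     (\<forall>(i, j, k, l) \<in> torsions P. \<forall>n. kappa P i j k l n \<ge> 0) \<and>
     (\<forall>i j. LJA P i j \<ge> 0 \<and> LJB P i j \<ge> 0) \<and>
     (\<forall>i j. i \<noteq> j \<and> (charge P i * charge P j < 0 \<or> LJB P i j > 0) \<longrightarrow> LJA P i j > 0)"

text \<open>The molecular potential (as a real-valued formula; meaningful on collision_free).\<close>
definition mol_V :: "('n::finite) mol_params \<Rightarrow> real^3^'n \<Rightarrow> real" where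
  "mol_V P x =
     (\<Sum>(i, j) \<in> bonds P. bcoef P i j * (norm (x $ i - x $ j) - lbar P i j)\<^sup>2)
   + (\<Sum>(i, j, k) \<in> angles P.
        acoef P i j k * (bond_angle (x $ i) (x $ j) (x $ k) - abar P i j k)\<^sup>2)
   + (\<Sum>(i, j, k, l) \<in> torsions P. \<Sum>n = 1..nmax P.
        kappa P i j k l n *
          (1 + cos (real n * torsion_angle (x $ i) (x $ j) (x $ k) (x $ l) - phibar P i j k l n)))
   + (\<Sum>i\<in>UNIV. \<Sum>j \<in> UNIV - {i}. charge P i * charge P j / norm (x $ i - x $ j))
   + (\<Sum>i\<in>UNIV. \<Sum>j \<in> UNIV - {i}.
        LJA P i j / norm (x $ i - x $ j) ^ 12 - LJB P i j / norm (x $ i - x $ j) ^ 6)"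

definition C1_on :: "'a::euclidean_space set \<Rightarrow> ('a \<Rightarrow> real) \<Rightarrow> bool" where
  "C1_on S f \<longleftrightarrow> (\<exists>f'. (\<forall>x \<in> S. (f has_derivative blinfun_apply (f' x)) (at x)) \<and>
                         continuous_on S f')"

definition boltz :: "real \<Rightarrow> ereal \<Rightarrow> real" where
  "boltz \<beta> u = (if u = \<infinity> then 0 else exp (- \<beta> * real_of_ereal u))"

end

theory Submission
  imports Defs
begin

definition sq0 :: "real \<Rightarrow> real" where "sq0 s = (max 0 s)^2"

lemma sq0_deriv: "(sq0 has_real_derivative (2 * max 0 s)) (at s)"
proof -
  have e: "sq0 = (\<lambda>x. if x \<in> {..0} then 0 else x^2)"
    by (auto simp: sq0_def fun_eq_iff max_def)
  have cl: "closure {..0::real} \<inter> closure (greaterThan 0) = {0}" by auto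
  have U: "{..0::real} \<union> (greaterThan 0) = UNIV" by auto
  have "((\<lambda>x. if x \<in> {..0} then 0 else x^2) has_derivative
      (if s \<in> {..0} then (\<lambda>_ h. 0) s else (\<lambda>x h. h * (2*x)) s)) (at s within ({..0} \<union> (greaterThan 0)))"
    apply (rule has_derivative_If_within_closures[where f'="\<lambda>_ h. 0" and g'="\<lambda>x h. h * (2*x)"])
    unfolding cl
    apply (auto intro!: derivative_eq_intros)
    done
  then show ?thesis unfolding has_field_derivative_def U e
    by (auto simp: max_def fun_eq_iff elim!: has_derivative_eq_rhs split: if_splits)
qed

definition Hc :: "real \<Rightarrow> real" where "Hc s = s - sq0 s / 4 + sq0 (s - 2) / 4"
definition Hd :: "real \<Rightarrow> real" where "Hd s = 1 - max 0 s / 2 + max 0 (s - 2) / 2"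

lemma Hc_deriv: "(Hc has_real_derivative Hd s) (at s)"
proof -
  have d2: "((\<lambda>z. sq0 (z - 2)) has_real_derivative 2*max 0 (s-2) * 1) (at s)"
    by (rule DERIV_chain2[OF sq0_deriv]) (auto intro!: derivative_eq_intros)
  have "((\<lambda>z. z - sq0 z / 4 + sq0 (z-2)/4) has_real_derivative 1 - 2*max 0 s/4 + 2*max 0 (s-2)*1/4) (at s)"
    by (intro DERIV_add DERIV_diff DERIV_ident DERIV_cdivide sq0_deriv d2)
  then show ?thesis unfolding Hc_def[abs_def] Hd_def by simp
qed

lemma Hc_chain[derivative_intros]:
  "(f has_real_derivative f') (at x within S) \<Longrightarrow>
   ((\<lambda>x. Hc (f x)) has_real_derivative Hd (f x) * f') (at x within S)"
  by (rule DERIV_chain2[OF Hc_deriv])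

lemma Hd_cont: "continuous_on UNIV Hd"
  unfolding Hd_def by (intro continuous_intros) auto

lemma Hc_le0: "s \<le> 0 \<Longrightarrow> Hc s = s"
  by (simp add: Hc_def sq0_def)

lemma Hc_ge2: "s \<ge> 2 \<Longrightarrow> Hc s = 1"
  by (simp add: Hc_def sq0_def max_def power2_eq_square field_simps)

lemma Hd_ge2: "s \<ge> 2 \<Longrightarrow> Hd s = 0"
  by (simp add: Hd_def max_def field_simps)

lemma Hc_lower: "Hc s \<ge> min s 0"
proof (cases "s \<le> 0")
  case True then show ?thesis by (simp add: Hc_le0)
next
  case False
  show ?thesis
  proof (cases "s \<le> 2")
    case True
    then have "s * s \<le> 2 * s" using False by (intro mult_right_mono) auto
    then show ?thesis using True False by (simp add: Hc_def sq0_def max_def power2_eq_square)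
  next
    case False then show ?thesis by (simp add: Hc_ge2)
  qed
qed

lemma C1_cont:
  assumes "C1_on UNIV f" shows "continuous_on UNIV f"
proof -
  obtain D where D: "\<forall>x\<in>UNIV. (f has_derivative blinfun_apply (D x)) (at x)"
    using assms unfolding C1_on_def by blast
  show ?thesis
  proof (rule continuous_at_imp_continuous_on, rule ballI)
    fix x show "isCont f x" using D has_derivative_continuous by blast
  qed
qed

lemma C1_sub:
  assumes "C1_on UNIV f" shows "C1_on S f"
proof -
  obtain D where D: "\<forall>x\<in>UNIV. (f has_derivative blinfun_apply (D x)) (at x)"
    and Dc: "continuous_on UNIV D"
    using assms unfolding C1_on_def by blast
  show ?thesis unfolding C1_on_def
  proof (intro exI[of _ D] conjI ballI)
    show "(f has_derivative blinfun_apply (D x)) (at x)" for x using D by blast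
    show "continuous_on S D" by (rule continuous_on_subset[OF Dc subset_UNIV])
  qed
qed

lemma C1_comp:
  assumes "C1_on UNIV f" and g: "\<And>t. (g has_real_derivative g' t) (at t)"
    and "continuous_on UNIV g'"
  shows "C1_on UNIV (\<lambda>x. g (f x))"
proof -
  obtain D where D: "\<forall>x\<in>UNIV. (f has_derivative blinfun_apply (D x)) (at x)"
    and Dc: "continuous_on UNIV D"
    using assms(1) unfolding C1_on_def by blast
  have fc: "continuous_on UNIV f" using C1_cont[OF assms(1)] .
  have der: "((\<lambda>x. g (f x)) has_derivative blinfun_apply (g' (f x) *\<^sub>R D x)) (at x)" for x
  proof -
    have "(f has_derivative blinfun_apply (D x)) (at x)" using D by blast
    from DERIV_compose_FDERIV[OF g this] show ?thesis
      by (rule has_derivative_eq_rhs) (simp add: fun_eq_iff scaleR_blinfun.rep_eq)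
  qed
  have cont: "continuous_on UNIV (\<lambda>x. g' (f x) *\<^sub>R D x)"
    by (intro continuous_on_scaleR Dc continuous_on_compose2[OF assms(3) fc] subset_UNIV)
  show ?thesis unfolding C1_on_def
  proof (intro exI[of _ "\<lambda>x. g' (f x) *\<^sub>R D x"] conjI ballI)
    show "((\<lambda>x. g (f x)) has_derivative blinfun_apply (g' (f x) *\<^sub>R D x)) (at x)" for x by (rule der)
    show "continuous_on UNIV (\<lambda>x. g' (f x) *\<^sub>R D x)" by (rule cont)
  qed
qed

lemma C1_lip:
  fixes f :: "'a::euclidean_space \<Rightarrow> real"
  assumes "C1_on UNIV f" and "bounded \<Omega>"
  shows "\<exists>L. L-lipschitz_on \<Omega> f"
proof -
  obtain D where D: "\<forall>x\<in>UNIV. (f has_derivative blinfun_apply (D x)) (at x)"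
    and Dc: "continuous_on UNIV D"
    using assms(1) unfolding C1_on_def by blast
  obtain R where R1: "\<forall>x\<in>\<Omega>. norm x \<le> R"
    using assms(2) unfolding bounded_pos by blast
  have R: "\<Omega> \<subseteq> cball 0 R" using R1 by (auto simp: subset_iff mem_cball_0)
  have "compact (D ` cball 0 R)"
    by (rule compact_continuous_image[OF continuous_on_subset[OF Dc subset_UNIV] compact_cball])
  then have "bounded (D ` cball 0 R)" by (rule compact_imp_bounded)
  then obtain B where B0: "B > 0" and B1: "\<forall>y\<in>D ` cball 0 R. norm y \<le> B"
    unfolding bounded_pos by blast
  have B: "norm (D x) \<le> B" if "x \<in> cball 0 R" for x using B1 that by blast
  have *: "norm (f x - f y) \<le> B * norm (x - y)" if xy: "x \<in> cball 0 R" "y \<in> cball 0 R" for x y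
  proof (rule differentiable_bound[where f'="\<lambda>x. blinfun_apply (D x)" and S="cball 0 R"])
    show "convex (cball (0::'a) R)" by (rule convex_cball)
    show "(f has_derivative blinfun_apply (D z)) (at z within cball 0 R)" for z
    proof -
      have "(f has_derivative blinfun_apply (D z)) (at z)" using D by blast
      then show ?thesis by (rule has_derivative_at_withinI)
    qed
    show "onorm (blinfun_apply (D z)) \<le> B" if "z \<in> cball 0 R" for z
      using B[OF that] by (simp add: norm_blinfun.rep_eq)
    show "x \<in> cball 0 R" by (rule xy(1))
    show "y \<in> cball 0 R" by (rule xy(2))
  qed
  have "B-lipschitz_on \<Omega> f"
  proof (rule lipschitz_onI)
    fix x y assume "x \<in> \<Omega>" "y \<in> \<Omega>"
    then have "x \<in> cball 0 R" "y \<in> cball 0 R" using R by (blast, blast)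
    from *[OF this] show "dist (f x) (f y) \<le> B * dist x y" by (simp add: dist_norm)
  next
    show "0 \<le> B" using B0 by simp
  qed
  then show ?thesis by blast
qed

lemma open_CF: "open (collision_free :: (real^3^'n) set)"
proof -
  have "(collision_free :: (real^3^'n) set) =
      (\<Inter>p\<in>{p::'n\<times>'n. fst p \<noteq> snd p}. {x::real^3^'n. x $ fst p \<noteq> x $ snd p})"
    by (auto simp: collision_free_def)
  also have "open \<dots>"
    by (intro open_INT ballI open_Collect_neq continuous_intros) auto
  finally show ?thesis .
qed

lemma Ue_C1:
  fixes P :: "('n::finite) mol_params" and a :: real
  assumes P1: "C1_on collision_free (mol_V P)"
    and P3: "\<forall>C. \<exists>\<delta>>0. \<forall>x \<in> collision_free.
               (\<exists>i j. i \<noteq> j \<and> norm (x $ i - x $ j) < \<delta>) \<longrightarrow> mol_V P x \<ge> C"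
  shows "C1_on UNIV (\<lambda>x. if x \<in> collision_free then a + Hc (mol_V P x - a) else a + 1)"
proof -
  define CF where "CF = (collision_free :: (real^3^'n) set)"
  define V where "V = mol_V P"
  obtain fV where fV: "\<forall>x\<in>CF. (V has_derivative blinfun_apply (fV x)) (at x)" and fVc: "continuous_on CF fV"
    using P1 unfolding C1_on_def CF_def V_def by blast
  have oCF: "open CF" unfolding CF_def by (rule open_CF)
  have Vc: "continuous_on CF V"
    using fV by (intro continuous_at_imp_continuous_on ballI has_derivative_continuous) auto
  define W where "W = (\<lambda>x. if x\<in>CF then a + Hc (V x - a) else a + 1)"
  define DW where "DW = (\<lambda>x. if x \<in> CF then Hd (V x - a) *\<^sub>R fV x else 0)"
  define G where "G = (\<lambda>x. Hd (V x - a) *\<^sub>R fV x)"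
  have Gc: "continuous_on CF G" unfolding G_def
    by (intro continuous_on_scaleR fVc continuous_on_compose2[OF Hd_cont] continuous_intros Vc) auto
  have loc: "\<exists>e>0. \<forall>y. dist y x < e \<longrightarrow> W y = a + 1 \<and> DW y = 0" if "x \<notin> CF" for x
  proof -
    from that obtain i j where ij: "i \<noteq> j" "x $ i = x $ j" by (auto simp: collision_free_def CF_def)
    have P3': "\<exists>\<delta>>0. \<forall>y\<in>CF. (\<exists>i j. i \<noteq> j \<and> norm (y $ i - y $ j) < \<delta>) \<longrightarrow> a + 3 \<le> V y"
      unfolding V_def CF_def by (rule spec[OF P3])
    then obtain \<delta> where \<delta>c: "\<delta> > 0 \<and> (\<forall>y\<in>CF. (\<exists>i j. i \<noteq> j \<and> norm (y $ i - y $ j) < \<delta>) \<longrightarrow> a + 3 \<le> V y)" ..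
    have \<delta>: "\<delta> > 0" "\<forall>y\<in>CF. (\<exists>i j. i \<noteq> j \<and> norm (y $ i - y $ j) < \<delta>) \<longrightarrow> V y \<ge> a + 3"
      using \<delta>c by (rule conjunct1, rule conjunct2)
    show ?thesis
    proof (intro exI[of _ "\<delta>/2"] conjI allI impI)
      fix y assume y: "dist y x < \<delta>/2"
      have "norm (y $ i - y $ j) = norm ((y - x) $ i - (y - x) $ j)" using ij(2) by simp
      also have "\<dots> \<le> norm ((y - x) $ i) + norm ((y - x) $ j)" by (rule norm_triangle_ineq4)
      also have "\<dots> \<le> 2 * dist y x"
        using Finite_Cartesian_Product.norm_nth_le[of "y-x" i] Finite_Cartesian_Product.norm_nth_le[of "y-x" j]
        by (simp add: dist_norm)
      finally have "norm (y $ i - y $ j) < \<delta>" using y by simp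
      then have "y \<in> CF \<Longrightarrow> V y \<ge> a + 3" using \<delta> ij(1) by blast
      then show "W y = a + 1" "DW y = 0" using Hc_ge2 Hd_ge2 by (auto simp: W_def DW_def)
    qed (use \<delta> in simp)
  qed
  have der: "(W has_derivative blinfun_apply (DW x)) (at x)" for x
  proof (cases "x \<in> CF")
    case True
    have d: "((\<lambda>t. a + Hc (t - a)) has_real_derivative Hd (V x - a)) (at (V x))"
      by (auto intro!: derivative_eq_intros)
    have "((\<lambda>y. a + Hc (V y - a)) has_derivative (\<lambda>h. fV x h * Hd (V x - a))) (at x)"
      using DERIV_compose_FDERIV[OF d fV[rule_format, OF True]] by simp
    then have "(W has_derivative (\<lambda>h. fV x h * Hd (V x - a))) (at x)"
      by (rule has_derivative_transform_within_open[OF _ oCF True]) (simp add: W_def)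
    then show ?thesis
      by (rule has_derivative_eq_rhs) (simp add: DW_def True fun_eq_iff scaleR_blinfun.rep_eq)
  next
    case False
    obtain e where e: "e>0" "\<forall>y. dist y x < e \<longrightarrow> W y = a + 1 \<and> DW y = 0" using loc[OF False] by blast
    have "((\<lambda>y. a + 1) has_derivative (\<lambda>h. 0)) (at x)" by simp
    then have "(W has_derivative (\<lambda>h. 0)) (at x)"
      by (rule has_derivative_transform_within_open[OF _ open_ball[of x e]]) (use e in \<open>auto simp: dist_commute\<close>)
    moreover have "DW x = 0" using e by auto
    moreover have "blinfun_apply 0 = (\<lambda>h::real^3^'n. 0::real)" by (simp add: fun_eq_iff)
    ultimately show ?thesis by simp
  qed
  have cont: "isCont DW x" for x
  proof (cases "x \<in> CF")
    case True
    have "isCont G x" using Gc oCF True continuous_on_eq_continuous_at by blast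
    obtain e where e: "e>0" "ball x e \<subseteq> CF" using oCF True open_contains_ball by blast
    show ?thesis
      using continuous_transform_within[of x UNIV G e DW] \<open>isCont G x\<close> e
      by (auto simp: DW_def G_def dist_commute subset_iff)
  next
    case False
    obtain e where e: "e>0" "\<forall>y. dist y x < e \<longrightarrow> W y = a + 1 \<and> DW y = 0" using loc[OF False] by blast
    show ?thesis
      using continuous_transform_within[of x UNIV "\<lambda>_. 0" e DW] e by auto
  qed
  have "continuous_on UNIV DW" by (intro continuous_at_imp_continuous_on ballI cont)
  then show ?thesis using der unfolding C1_on_def W_def CF_def V_def by blast
qed

lemma L1_conv:
  fixes Fe :: "real \<Rightarrow> 'a::euclidean_space \<Rightarrow> real" and F :: "'a \<Rightarrow> real" and \<Omega> :: "'a set"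
  assumes \<Omega>s: "\<Omega> \<in> sets lborel" and \<Omega>fin: "emeasure lborel \<Omega> < \<infinity>"
    and Fe_m: "\<And>\<epsilon>. \<epsilon> > 0 \<Longrightarrow> Fe \<epsilon> \<in> borel_measurable (restrict_space lborel \<Omega>)"
    and F_m: "F \<in> borel_measurable (restrict_space lborel \<Omega>)"
    and K: "0 \<le> K"
    and Fe_b: "\<And>\<epsilon> x. \<epsilon> > 0 \<Longrightarrow> x \<in> \<Omega> \<Longrightarrow> 0 \<le> Fe \<epsilon> x \<and> Fe \<epsilon> x \<le> K"
    and F_b: "\<And>x. x \<in> \<Omega> \<Longrightarrow> 0 \<le> F x \<and> F x \<le> K"
    and lim: "\<And>x. x \<in> \<Omega> \<Longrightarrow> ((\<lambda>\<epsilon>. Fe \<epsilon> x) \<longlongrightarrow> F x) (at_right 0)"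
    and Zpos: "0 < enn2real (\<integral>\<^sup>+x. ennreal (F x) \<partial>restrict_space lborel \<Omega>)"
  shows "((\<lambda>\<epsilon>. \<integral>\<^sup>+x. ennreal \<bar>Fe \<epsilon> x / enn2real (\<integral>\<^sup>+x. ennreal (Fe \<epsilon> x) \<partial>restrict_space lborel \<Omega>)
            - F x / enn2real (\<integral>\<^sup>+x. ennreal (F x) \<partial>restrict_space lborel \<Omega>)\<bar> \<partial>restrict_space lborel \<Omega>)
          \<longlongrightarrow> 0) (at_right 0)"
proof -
  define M where "M = restrict_space lborel \<Omega>"
  have spM: "space M = \<Omega>" by (simp add: M_def space_restrict_space)
  have "emeasure M (space M) \<noteq> \<infinity>"
    using \<Omega>fin \<Omega>s by (simp add: M_def emeasure_restrict_space)
  then interpret finite_measure M by (rule finite_measureI)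
  define Ze where "Ze \<epsilon> = enn2real (\<integral>\<^sup>+x. ennreal (Fe \<epsilon> x) \<partial>M)" for \<epsilon>
  define Z where "Z = enn2real (\<integral>\<^sup>+x. ennreal (F x) \<partial>M)"
  have Z0: "Z > 0" using Zpos by (simp add: Z_def M_def)
  have Fe_m': "\<And>\<epsilon>. \<epsilon> > 0 \<Longrightarrow> Fe \<epsilon> \<in> borel_measurable M" using Fe_m by (simp add: M_def)
  have F_m': "F \<in> borel_measurable M" using F_m by (simp add: M_def)
  have intFe: "integrable M (Fe \<epsilon>)" if "\<epsilon> > 0" for \<epsilon>
    by (rule integrable_const_bound[where B=K]) (use Fe_b[OF that] Fe_m'[OF that] in \<open>auto simp: spM intro!: AE_I2\<close>)
  have intF: "integrable M F"
    by (rule integrable_const_bound[where B=K]) (use F_b F_m' in \<open>auto simp: spM intro!: AE_I2\<close>)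
  have Ze_eq: "Ze \<epsilon> = integral\<^sup>L M (Fe \<epsilon>)" if "\<epsilon> > 0" for \<epsilon>
  proof -
    have "(\<integral>\<^sup>+x. ennreal (Fe \<epsilon> x) \<partial>M) = ennreal (integral\<^sup>L M (Fe \<epsilon>))"
      by (rule nn_integral_eq_integral[OF intFe[OF that]]) (use Fe_b[OF that] in \<open>auto simp: spM intro!: AE_I2\<close>)
    moreover have "integral\<^sup>L M (Fe \<epsilon>) \<ge> 0"
      by (rule integral_nonneg_AE) (use Fe_b[OF that] in \<open>auto simp: spM intro!: AE_I2\<close>)
    ultimately show ?thesis by (simp add: Ze_def)
  qed
  have Z_eq: "Z = integral\<^sup>L M F"
  proof -
    have "(\<integral>\<^sup>+x. ennreal (F x) \<partial>M) = ennreal (integral\<^sup>L M F)"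
      by (rule nn_integral_eq_integral[OF intF]) (use F_b in \<open>auto simp: spM intro!: AE_I2\<close>)
    moreover have "integral\<^sup>L M F \<ge> 0"
      by (rule integral_nonneg_AE) (use F_b in \<open>auto simp: spM intro!: AE_I2\<close>)
    ultimately show ?thesis by (simp add: Z_def)
  qed
  have ptw: "(\<lambda>n. Fe (S n) x) \<longlonglongrightarrow> F x" if "x \<in> \<Omega>" "filterlim S (at_right 0) sequentially" for x S
    using filterlim_compose[OF lim[OF that(1)] that(2)] .
  have Zlim: "(Ze \<longlongrightarrow> Z) (at_right 0)"
  proof (rule tendsto_at_right_sequentially[where b=1])
    fix S :: "nat \<Rightarrow> real" assume S: "\<And>n. 0 < S n" "\<And>n. S n < 1" "decseq S" "S \<longlonglongrightarrow> 0"
    have Sf: "filterlim S (at_right 0) sequentially" using S by (intro tendsto_imp_filterlim_at_right) auto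
    have "(\<lambda>n. integral\<^sup>L M (Fe (S n))) \<longlonglongrightarrow> integral\<^sup>L M F"
    proof (rule integral_dominated_convergence[where w="\<lambda>_. K"])
      show "F \<in> borel_measurable M" by (rule F_m')
      show "Fe (S n) \<in> borel_measurable M" for n using Fe_m' S(1) by blast
      show "integrable M (\<lambda>_. K)" by simp
      show "AE x in M. (\<lambda>n. Fe (S n) x) \<longlonglongrightarrow> F x" using ptw Sf by (auto simp: spM intro!: AE_I2)
      show "AE x in M. norm (Fe (S n) x) \<le> K" for n using Fe_b[OF S(1)[of n]] by (auto simp: spM intro!: AE_I2)
    qed
    then show "(\<lambda>n. Ze (S n)) \<longlonglongrightarrow> Z" using Ze_eq S(1) Z_eq by simp
  qed simp
  have "Z/2 < Z" using Z0 by simp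
  from order_tendstoD(1)[OF Zlim this] have "eventually (\<lambda>\<epsilon>. Z/2 < Ze \<epsilon>) (at_right 0)" .
  then obtain b where b: "b > 0" "\<And>\<epsilon>. 0 < \<epsilon> \<Longrightarrow> \<epsilon> < b \<Longrightarrow> Z/2 < Ze \<epsilon>"
    by (auto simp: eventually_at_right_field)
  have "((\<lambda>\<epsilon>. \<integral>\<^sup>+x. ennreal \<bar>Fe \<epsilon> x / Ze \<epsilon> - F x / Z\<bar> \<partial>M) \<longlongrightarrow> 0) (at_right 0)"
  proof (rule tendsto_at_right_sequentially[OF b(1)])
    fix S :: "nat \<Rightarrow> real" assume S: "\<And>n. 0 < S n" "\<And>n. S n < b" "decseq S" "S \<longlonglongrightarrow> 0"
    have Sf: "filterlim S (at_right 0) sequentially" using S by (intro tendsto_imp_filterlim_at_right) auto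
    have "(\<lambda>n. \<integral>\<^sup>+x. norm (F x / Z - Fe (S n) x / Ze (S n)) \<partial>M) \<longlonglongrightarrow> 0"
    proof (rule nn_integral_dominated_convergence_norm[where w="\<lambda>_. 2*K/Z"])
      show "(\<lambda>x. Fe (S n) x / Ze (S n)) \<in> borel_measurable M" for n
        using Fe_m'[OF S(1)[of n]] by (intro borel_measurable_divide borel_measurable_const)
      show "(\<lambda>x. F x / Z) \<in> borel_measurable M"
        using F_m' by (intro borel_measurable_divide borel_measurable_const)
      show "(\<lambda>_. 2*K/Z) \<in> borel_measurable M" by simp
      show "AE x in M. norm (Fe (S n) x / Ze (S n)) \<le> 2*K/Z" for n
      proof (rule AE_I2)
        fix x assume "x \<in> space M"
        then have x: "x \<in> \<Omega>" by (simp add: spM)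
        have Zn: "Z/2 < Ze (S n)" using b(2) S(1,2) by blast
        have "Fe (S n) x / Ze (S n) \<le> K / (Z/2)"
          using Fe_b[OF S(1) x] Zn Z0 K by (intro frac_le) auto
        moreover have "Fe (S n) x / Ze (S n) \<ge> 0" using Fe_b[OF S(1) x] Zn Z0 by auto
        moreover have "K / (Z/2) = 2*K/Z" by simp
        ultimately show "norm (Fe (S n) x / Ze (S n)) \<le> 2*K/Z"
          by (simp only: real_norm_def abs_of_nonneg)
      qed
      have "(\<integral>\<^sup>+x. ennreal (2*K/Z) \<partial>M) = ennreal (2*K/Z) * emeasure M (space M)" by simp
      also have "\<dots> < \<infinity>"
      proof -
        have "emeasure M (space M) < top" using emeasure_finite[of "space M"] less_top by blast
        then show ?thesis by (simp add: ennreal_mult_less_top)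
      qed
      finally show "(\<integral>\<^sup>+x. ennreal (2*K/Z) \<partial>M) < \<infinity>" .
      show "AE x in M. (\<lambda>n. Fe (S n) x / Ze (S n)) \<longlonglongrightarrow> F x / Z"
        using Z0 by (auto simp: spM intro!: AE_I2 tendsto_divide ptw Sf filterlim_compose[OF Zlim Sf])
    qed
    then show "(\<lambda>n. \<integral>\<^sup>+x. ennreal \<bar>Fe (S n) x / Ze (S n) - F x / Z\<bar> \<partial>M) \<longlonglongrightarrow> 0"
      by (simp add: abs_minus_commute)
  qed
  then show ?thesis by (simp add: M_def Ze_def Z_def)
qed

theorem theorem5p1:
  fixes \<Omega> :: "(real^3^'n) set" and \<beta> :: real and P :: "'n mol_params"
    and U :: "real^3^'n \<Rightarrow> ereal"
  assumes "open \<Omega>" and "bounded \<Omega>" and "\<beta> > 0"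
    and "mol_admissible P"
    and U_def: "\<forall>x \<in> \<Omega>. U x = (if x \<in> collision_free then ereal (mol_V P x) else \<infinity>)"
    and P1: "C1_on collision_free (mol_V P)"
    and P2: "\<exists>U0. \<forall>x \<in> collision_free. mol_V P x \<ge> U0"
    and P3: "\<forall>C. \<exists>\<delta>>0. \<forall>x \<in> collision_free.
               (\<exists>i j. i \<noteq> j \<and> norm (x $ i - x $ j) < \<delta>) \<longrightarrow> mol_V P x \<ge> C"
    and Z_pos: "0 < (\<integral>\<^sup>+ x \<in> \<Omega>. ennreal (boltz \<beta> (U x)) \<partial>lborel)"
    and Z_fin: "(\<integral>\<^sup>+ x \<in> \<Omega>. ennreal (boltz \<beta> (U x)) \<partial>lborel) < \<infinity>"
  shows "\<exists>Ue :: real \<Rightarrow> real^3^'n \<Rightarrow> real.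
    \<comment> \<open>(a)(i)\<close>
    (\<forall>\<epsilon>>0. C1_on \<Omega> (Ue \<epsilon>) \<and> (\<exists>L. L-lipschitz_on \<Omega> (Ue \<epsilon>))) \<and>
    \<comment> \<open>(a)(ii)\<close>
    (\<exists>M>0. \<forall>\<epsilon>>0. \<forall>x \<in> \<Omega>. Ue \<epsilon> x \<ge> - M) \<and>
    \<comment> \<open>(a)(iii)\<close>
    (\<forall>x \<in> \<Omega>. ((\<lambda>\<epsilon>. ereal (Ue \<epsilon> x)) \<longlongrightarrow> U x) (at_right 0)) \<and>
    \<comment> \<open>(a)(iv)\<close>
    (\<forall>\<epsilon>>0. \<forall>x \<in> \<Omega>. U x \<le> ereal (1 / \<epsilon>) \<longrightarrow> ereal (Ue \<epsilon> x) = U x) \<and>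
    \<comment> \<open>(b)\<close>
    (let F = (\<lambda>x. boltz \<beta> (U x));
         Z = enn2real (\<integral>\<^sup>+ x \<in> \<Omega>. ennreal (F x) \<partial>lborel);
         \<rho> = (\<lambda>x. F x / Z);
         Fe = (\<lambda>\<epsilon> x. exp (- \<beta> * Ue \<epsilon> x));
         Ze = (\<lambda>\<epsilon>. enn2real (\<integral>\<^sup>+ x \<in> \<Omega>. ennreal (Fe \<epsilon> x) \<partial>lborel));
         \<rho>e = (\<lambda>\<epsilon> x. Fe \<epsilon> x / Ze \<epsilon>)
     in (\<forall>\<epsilon>>0. C1_on \<Omega> (\<rho>e \<epsilon>) \<and> (\<exists>L. L-lipschitz_on \<Omega> (\<rho>e \<epsilon>))) \<and>
        ((\<lambda>\<epsilon>. \<integral>\<^sup>+ x \<in> \<Omega>. ennreal \<bar>\<rho>e \<epsilon> x - \<rho> x\<bar> \<partial>lborel) \<longlongrightarrow> 0) (at_right 0))"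
proof -
  define CF where "CF = (collision_free :: (real^3^'n) set)"
  define V where "V = mol_V P"
  obtain U0 where U0: "\<forall>x\<in>CF. V x \<ge> U0" using P2 by (auto simp: CF_def V_def)
  define M0 where "M0 = \<bar>U0\<bar> + 1"
  have M0: "M0 > 0" by (simp add: M0_def)
  define Ue where "Ue = (\<lambda>\<epsilon> x. if x \<in> CF then 1/\<epsilon> + Hc (V x - 1/\<epsilon>) else 1/\<epsilon> + 1)"
  have UxCF: "\<And>x. x\<in>\<Omega> \<Longrightarrow> U x = (if x \<in> CF then ereal (V x) else \<infinity>)"
    using U_def by (simp add: CF_def V_def)
  have UeC1: "C1_on UNIV (Ue \<epsilon>)" for \<epsilon>
    unfolding Ue_def CF_def V_def using Ue_C1[OF P1 P3, of "1/\<epsilon>"] .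
  have oCF: "open CF" unfolding CF_def by (rule open_CF)
  obtain fV where fV: "\<forall>x\<in>CF. (V has_derivative blinfun_apply (fV x)) (at x)"
    using P1 unfolding C1_on_def CF_def V_def by blast
  have Vc: "continuous_on CF V"
    using fV by (intro continuous_at_imp_continuous_on ballI has_derivative_continuous) auto
  have Ue_lb: "Ue \<epsilon> x \<ge> -M0" if "\<epsilon> > 0" for \<epsilon> x
  proof (cases "x \<in> CF")
    case True
    have e: "1/\<epsilon> > 0" using that by simp
    have h: "Hc (V x - 1/\<epsilon>) \<ge> V x - 1/\<epsilon> \<or> Hc (V x - 1/\<epsilon>) \<ge> 0"
      using Hc_lower[of "V x - 1/\<epsilon>"] by (auto simp: min_def split: if_splits)
    have u: "Ue \<epsilon> x = 1/\<epsilon> + Hc (V x - 1/\<epsilon>)" using True by (simp add: Ue_def)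
    have v: "U0 \<le> V x" using U0 True by blast
    have w: "- U0 \<le> \<bar>U0\<bar>" by simp
    show ?thesis using h u v w e unfolding M0_def by linarith
  next
    case False
    have e: "1/\<epsilon> > 0" using that by simp
    have "Ue \<epsilon> x = 1/\<epsilon> + 1" using False by (simp add: Ue_def)
    then show ?thesis using e M0 by linarith
  qed
  have ev_eq: "eventually (\<lambda>\<epsilon>. Ue \<epsilon> x = V x) (at_right 0)" if "x \<in> CF" for x
    unfolding eventually_at_right_field
  proof (intro exI[of _ "1/(\<bar>V x\<bar> + 1)"] conjI allI impI)
    show "0 < 1/(\<bar>V x\<bar> + 1)" by simp
    fix \<epsilon> :: real assume e: "0 < \<epsilon>" "\<epsilon> < 1/(\<bar>V x\<bar> + 1)"
    have a: "\<epsilon> * (\<bar>V x\<bar> + 1) < 1" using e by (simp add: pos_less_divide_eq)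
    then have a2: "\<epsilon> * \<bar>V x\<bar> + \<epsilon> < 1" by (simp add: distrib_left)
    have b: "\<epsilon> * V x \<le> \<epsilon> * \<bar>V x\<bar>" using e(1) by (intro mult_left_mono) auto
    have c: "\<epsilon> * V x \<le> 1" using a2 b e(1) by linarith
    then have "V x \<le> 1/\<epsilon>" using e(1) by (simp add: pos_le_divide_eq mult.commute)
    then show "Ue \<epsilon> x = V x" using Hc_le0[of "V x - 1/\<epsilon>"] that by (simp add: Ue_def)
  qed
  have inf: "filterlim (\<lambda>\<epsilon>::real. 1/\<epsilon> + 1) at_top (at_right 0)"
    using filterlim_tendsto_add_at_top[OF tendsto_const[of 1] filterlim_inverse_at_top_right]
    by (simp add: inverse_eq_divide add.commute)
  have Ue_nCF: "Ue \<epsilon> x = 1/\<epsilon> + 1" if "x \<notin> CF" for \<epsilon> x using that by (simp add: Ue_def)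
  have Ue_iv: "ereal (Ue \<epsilon> x) = U x" if "\<epsilon> > 0" "x \<in> \<Omega>" "U x \<le> ereal (1/\<epsilon>)" for \<epsilon> x
  proof -
    have "x \<in> CF" using that UxCF[of x] by (auto split: if_splits)
    moreover then have "V x \<le> 1/\<epsilon>" using that UxCF[of x] by auto
    ultimately show ?thesis using Hc_le0[of "V x - 1/\<epsilon>"] UxCF[OF that(2)] by (simp add: Ue_def)
  qed
  have Ue_lim: "((\<lambda>\<epsilon>. ereal (Ue \<epsilon> x)) \<longlongrightarrow> U x) (at_right 0)" if "x \<in> \<Omega>" for x
  proof (cases "x \<in> CF")
    case True
    have "eventually (\<lambda>\<epsilon>. ereal (Ue \<epsilon> x) = U x) (at_right 0)"
      using ev_eq[OF True] UxCF[OF that] True by (auto elim: eventually_mono)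
    then show ?thesis by (rule tendsto_eventually)
  next
    case False
    then show ?thesis using UxCF[OF that] inf by (simp add: Ue_nCF tendsto_PInfty_eq_at_top)
  qed
  define K where "K = exp (\<beta> * M0)"
  have K: "K \<ge> 0" by (simp add: K_def)
  define Fe where "Fe = (\<lambda>\<epsilon> x. exp (- \<beta> * Ue \<epsilon> x))"
  define F where "F = (\<lambda>x. boltz \<beta> (U x))"
  have FeC1: "C1_on UNIV (Fe \<epsilon>)" for \<epsilon>
    unfolding Fe_def
    by (rule C1_comp[OF UeC1, where g'="\<lambda>t. - \<beta> * exp (- \<beta> * t)"]) (auto intro!: derivative_eq_intros continuous_intros)
  have Fe_b: "0 \<le> Fe \<epsilon> x \<and> Fe \<epsilon> x \<le> K" if "\<epsilon> > 0" for \<epsilon> x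
  proof -
    have "- \<beta> * Ue \<epsilon> x \<le> \<beta> * M0"
      using Ue_lb[OF that, of x] \<open>\<beta> > 0\<close> mult_left_mono[of "- Ue \<epsilon> x" M0 \<beta>] by simp
    then show ?thesis by (simp add: Fe_def K_def)
  qed
  have F_b: "0 \<le> F x \<and> F x \<le> K" if "x \<in> \<Omega>" for x
  proof (cases "x \<in> CF")
    case True
    have h1: "U0 \<le> V x" using U0 True by blast
    have h2: "- U0 \<le> \<bar>U0\<bar>" by simp
    have "- V x \<le> M0" using h1 h2 unfolding M0_def by linarith
    then have "- \<beta> * V x \<le> \<beta> * M0"
      using \<open>\<beta> > 0\<close> mult_left_mono[of "- V x" M0 \<beta>] by simp
    then show ?thesis using UxCF[OF that] True by (simp add: F_def K_def boltz_def)
  next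
    case False
    then show ?thesis using UxCF[OF that] by (simp add: F_def K_def boltz_def)
  qed
  have F_lim: "((\<lambda>\<epsilon>. Fe \<epsilon> x) \<longlongrightarrow> F x) (at_right 0)" if "x \<in> \<Omega>" for x
  proof (cases "x \<in> CF")
    case True
    have "eventually (\<lambda>\<epsilon>. Fe \<epsilon> x = F x) (at_right 0)"
      using ev_eq[OF True] UxCF[OF that] True by (auto simp: Fe_def F_def boltz_def elim: eventually_mono)
    then show ?thesis by (rule tendsto_eventually)
  next
    case False
    have "filterlim (\<lambda>\<epsilon>. - \<beta> * (1/\<epsilon> + 1)) at_bot (at_right 0)"
      by (rule filterlim_tendsto_neg_mult_at_bot[OF tendsto_const _ inf]) (use \<open>\<beta> > 0\<close> in simp)
    then have "((\<lambda>\<epsilon>. exp (- \<beta> * (1/\<epsilon> + 1))) \<longlongrightarrow> 0) (at_right 0)"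
      by (rule filterlim_compose[OF exp_at_bot])
    then show ?thesis using False UxCF[OF that] by (simp add: Fe_def F_def boltz_def Ue_nCF)
  qed
  have \<Omega>s: "\<Omega> \<in> sets lborel" using \<open>open \<Omega>\<close> by simp
  have R: "\<And>f. (\<integral>\<^sup>+x. f x * indicator \<Omega> x \<partial>lborel) = (\<integral>\<^sup>+x. f x \<partial>restrict_space lborel \<Omega>)"
    using nn_integral_restrict_space[of \<Omega> lborel] \<Omega>s by simp
  have Fe_m: "Fe \<epsilon> \<in> borel_measurable (restrict_space lborel \<Omega>)" for \<epsilon>
    by (intro measurable_restrict_space1) (simp add: borel_measurable_continuous_onI C1_cont[OF FeC1])
  have Gc: "continuous_on CF (\<lambda>x. exp (- \<beta> * V x))" by (intro continuous_intros Vc)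
  have G_m: "(\<lambda>x. indicator CF x *\<^sub>R exp (- \<beta> * V x)) \<in> borel_measurable borel"
    by (rule borel_measurable_continuous_on_indicator[OF borel_open[OF oCF] Gc])
  have F_m: "F \<in> borel_measurable (restrict_space lborel \<Omega>)"
  proof -
    have m: "(\<lambda>x. indicator CF x *\<^sub>R exp (- \<beta> * V x)) \<in> borel_measurable (restrict_space lborel \<Omega>)"
      by (intro measurable_restrict_space1) (subst measurable_lborel2, rule G_m)
    have e: "indicator CF x *\<^sub>R exp (- \<beta> * V x) = F x" if "x \<in> space (restrict_space lborel \<Omega>)" for x
    proof -
      have x: "x \<in> \<Omega>" using that by (simp add: space_restrict_space)
      show ?thesis using UxCF[OF x] by (cases "x \<in> CF") (simp_all add: F_def boltz_def)
    qed
    show ?thesis by (rule iffD1[OF measurable_cong[OF e] m])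
  qed
  have Zpos: "0 < enn2real (\<integral>\<^sup>+x. ennreal (F x) \<partial>restrict_space lborel \<Omega>)"
    using Z_pos Z_fin unfolding R[symmetric] F_def by (simp add: enn2real_positive_iff)
  have L1: "((\<lambda>\<epsilon>. \<integral>\<^sup>+x. ennreal \<bar>Fe \<epsilon> x / enn2real (\<integral>\<^sup>+x. ennreal (Fe \<epsilon> x) \<partial>restrict_space lborel \<Omega>)
            - F x / enn2real (\<integral>\<^sup>+x. ennreal (F x) \<partial>restrict_space lborel \<Omega>)\<bar> \<partial>restrict_space lborel \<Omega>)
          \<longlongrightarrow> 0) (at_right 0)"
    by (rule L1_conv[OF \<Omega>s _ Fe_m F_m K Fe_b F_b F_lim Zpos]) (use \<open>bounded \<Omega>\<close> emeasure_bounded_finite in auto)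
  have rhoC1: "C1_on UNIV (\<lambda>x. Fe \<epsilon> x / c)" for \<epsilon> c
  proof -
    have d: "((\<lambda>t. t / c) has_real_derivative 1 / c) (at t)" for t
      using DERIV_cdivide[OF DERIV_ident, of c t] by simp
    show ?thesis by (rule C1_comp[OF FeC1 d continuous_on_const])
  qed
  show ?thesis
  proof (intro exI[of _ Ue] conjI)
    show "\<forall>\<epsilon>>0. C1_on \<Omega> (Ue \<epsilon>) \<and> (\<exists>L. L-lipschitz_on \<Omega> (Ue \<epsilon>))"
    proof (intro allI impI conjI)
      show "C1_on \<Omega> (Ue \<epsilon>)" for \<epsilon> by (rule C1_sub[OF UeC1])
      show "\<exists>L. L-lipschitz_on \<Omega> (Ue \<epsilon>)" for \<epsilon> by (rule C1_lip[OF UeC1 \<open>bounded \<Omega>\<close>])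
    qed
    show "\<exists>M>0. \<forall>\<epsilon>>0. \<forall>x\<in>\<Omega>. - M \<le> Ue \<epsilon> x" using M0 Ue_lb by blast
    show "\<forall>x\<in>\<Omega>. ((\<lambda>\<epsilon>. ereal (Ue \<epsilon> x)) \<longlongrightarrow> U x) (at_right 0)" using Ue_lim by blast
    show "\<forall>\<epsilon>>0. \<forall>x\<in>\<Omega>. U x \<le> ereal (1 / \<epsilon>) \<longrightarrow> ereal (Ue \<epsilon> x) = U x" using Ue_iv by blast
    show "let F = \<lambda>x. boltz \<beta> (U x); Z = enn2real (\<integral>\<^sup>+ x \<in> \<Omega>. ennreal (F x) \<partial>lborel); \<rho> = \<lambda>x. F x / Z;
        Fe = \<lambda>\<epsilon> x. exp (- \<beta> * Ue \<epsilon> x); Ze = \<lambda>\<epsilon>. enn2real (\<integral>\<^sup>+ x \<in> \<Omega>. ennreal (Fe \<epsilon> x) \<partial>lborel);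
        \<rho>e = \<lambda>\<epsilon> x. Fe \<epsilon> x / Ze \<epsilon>
    in (\<forall>\<epsilon>>0. C1_on \<Omega> (\<rho>e \<epsilon>) \<and> (\<exists>L. L-lipschitz_on \<Omega> (\<rho>e \<epsilon>))) \<and>
       ((\<lambda>\<epsilon>. \<integral>\<^sup>+ x \<in> \<Omega>. ennreal \<bar>\<rho>e \<epsilon> x - \<rho> x\<bar> \<partial>lborel) \<longlongrightarrow> 0) (at_right 0)"
      unfolding Let_def R
    proof (intro conjI allI impI)
      show "C1_on \<Omega> (\<lambda>x. exp (- \<beta> * Ue \<epsilon> x) / enn2real (\<integral>\<^sup>+ x. ennreal (exp (- \<beta> * Ue \<epsilon> x)) \<partial>restrict_space lborel \<Omega>))" for \<epsilon>
        by (rule C1_sub[OF rhoC1[unfolded Fe_def]])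
      show "\<exists>L. L-lipschitz_on \<Omega> (\<lambda>x. exp (- \<beta> * Ue \<epsilon> x) / enn2real (\<integral>\<^sup>+ x. ennreal (exp (- \<beta> * Ue \<epsilon> x)) \<partial>restrict_space lborel \<Omega>))" for \<epsilon>
        by (rule C1_lip[OF rhoC1[unfolded Fe_def] \<open>bounded \<Omega>\<close>])
      show "((\<lambda>\<epsilon>. \<integral>\<^sup>+ x. ennreal \<bar>exp (- \<beta> * Ue \<epsilon> x) / enn2real (\<integral>\<^sup>+ x. ennreal (exp (- \<beta> * Ue \<epsilon> x)) \<partial>restrict_space lborel \<Omega>) -
            boltz \<beta> (U x) / enn2real (\<integral>\<^sup>+ x. ennreal (boltz \<beta> (U x)) \<partial>restrict_space lborel \<Omega>)\<bar> \<partial>restrict_space lborel \<Omega>) \<longlongrightarrow> 0) (at_right 0)"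
        using L1 unfolding Fe_def F_def .
    qed
  qed
qed

end
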